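(* Let $\ell\ge2$ and let $G$ be a graph such that every connected component of $\overline{G}$ is a pendant tree. If $c$ is the number of connected components of $\overline{G}$, then $G$ is $N$-AW if and only if $\gcd(2c-1,\ell)=1$.
   Context: All graphs are finite and simple; $\overline{G}$ is the complement. For a graph $H$, $H\odot K_1$ is obtained from $H$ by adding, for each vertex $u$ of $H$, a new vertex adjacent only to $u$; a pendant tree is a tree of this form. Labels lie in $\mathbb{Z}_\ell$. In the neighborhood Lights Out game, toggling a vertex $w$ adds $1$ (mod $\ell$) to the label of each vertex of the closed neighborhood $N[w]$; the game is won when all labels are $0$; a graph is $N$-AW if every initial labeling can be won. *)

theory Defs
  imports Main
begin

definition simple_graph :: "'a set \<Rightarrow> ('a \<Rightarrow> 'a \<Rightarrow> bool) \<Rightarrow> bool" where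
  "simple_graph V E \<longleftrightarrow> finite V \<and> (\<forall>x y. E x y \<longrightarrow> x \<in> V \<and> y \<in> V \<and> x \<noteq> y)
     \<and> (\<forall>x y. E x y \<longrightarrow> E y x)"

definition compl_graph :: "'a set \<Rightarrow> ('a \<Rightarrow> 'a \<Rightarrow> bool) \<Rightarrow> 'a \<Rightarrow> 'a \<Rightarrow> bool" where
  "compl_graph V E x y \<longleftrightarrow> x \<in> V \<and> y \<in> V \<and> x \<noteq> y \<and> \<not> E x y"

definition induced :: "'a set \<Rightarrow> ('a \<Rightarrow> 'a \<Rightarrow> bool) \<Rightarrow> 'a \<Rightarrow> 'a \<Rightarrow> bool" where
  "induced C E x y \<longleftrightarrow> E x y \<and> x \<in> C \<and> y \<in> C"

definition components :: "'a set \<Rightarrow> ('a \<Rightarrow> 'a \<Rightarrow> bool) \<Rightarrow> 'a set set" where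
  "components V E = {{y \<in> V. (induced V E)\<^sup>*\<^sup>* x y} | x. x \<in> V}"

definition connected_graph :: "'a set \<Rightarrow> ('a \<Rightarrow> 'a \<Rightarrow> bool) \<Rightarrow> bool" where
  "connected_graph V E \<longleftrightarrow> V \<noteq> {} \<and> (\<forall>x\<in>V. \<forall>y\<in>V. (induced V E)\<^sup>*\<^sup>* x y)"

definition acyclic_graph :: "'a set \<Rightarrow> ('a \<Rightarrow> 'a \<Rightarrow> bool) \<Rightarrow> bool" where
  "acyclic_graph V E \<longleftrightarrow> \<not> (\<exists>xs. distinct xs \<and> length xs \<ge> 3 \<and> set xs \<subseteq> V
      \<and> (\<forall>i. Suc i < length xs \<longrightarrow> E (xs ! i) (xs ! Suc i)) \<and> E (last xs) (hd xs))"

definition tree_graph :: "'a set \<Rightarrow> ('a \<Rightarrow> 'a \<Rightarrow> bool) \<Rightarrow> bool" where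
  "tree_graph V E \<longleftrightarrow> connected_graph V E \<and> acyclic_graph V E"

text \<open>(V,E) is (isomorphic to) H \<odot> K1 for some graph H: the vertices split into U (the
  vertices of H) and V - U, with a bijection m : U -> V - U such that m u is adjacent
  only to u.  E is assumed to live on V.\<close>
definition corona_K1_form :: "'a set \<Rightarrow> ('a \<Rightarrow> 'a \<Rightarrow> bool) \<Rightarrow> bool" where
  "corona_K1_form V E \<longleftrightarrow> (\<exists>U m. U \<subseteq> V \<and> bij_betw m U (V - U)
      \<and> (\<forall>u\<in>U. \<forall>x. E (m u) x \<longleftrightarrow> x = u))"

definition pendant_tree :: "'a set \<Rightarrow> ('a \<Rightarrow> 'a \<Rightarrow> bool) \<Rightarrow> bool" where
  "pendant_tree V E \<longleftrightarrow> tree_graph V E \<and> corona_K1_form V E"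

text \<open>Neighborhood Lights Out over Z_l: toggling w (t w times) adds t w to every vertex of N[w].
  The graph is N-AW if every initial labeling can be brought to all zeros.\<close>
definition closed_nbhd :: "'a set \<Rightarrow> ('a \<Rightarrow> 'a \<Rightarrow> bool) \<Rightarrow> 'a \<Rightarrow> 'a set" where
  "closed_nbhd V E w = {v \<in> V. v = w \<or> E w v}"

definition N_AW :: "'a set \<Rightarrow> ('a \<Rightarrow> 'a \<Rightarrow> bool) \<Rightarrow> nat \<Rightarrow> bool" where
  "N_AW V E l \<longleftrightarrow> (\<forall>f :: 'a \<Rightarrow> int. \<exists>t :: 'a \<Rightarrow> int. \<forall>v\<in>V.
      (f v + (\<Sum>w\<in>{w \<in> V. v \<in> closed_nbhd V E w}. t w)) mod int l = 0)"

end

theory Submission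
  imports Defs "HOL-Library.FuncSet"
begin

definition pathR :: "('a \<Rightarrow> 'a \<Rightarrow> bool) \<Rightarrow> 'a list \<Rightarrow> bool" where
  "pathR R xs \<longleftrightarrow> (\<forall>i. Suc i < length xs \<longrightarrow> R (xs ! i) (xs ! Suc i))"

lemma leaf_exists:
  assumes fin: "finite V"
    and edges: "\<forall>x y. R x y \<longrightarrow> x \<in> V \<and> y \<in> V \<and> x \<noteq> y"
    and sym: "\<forall>x y. R x y \<longrightarrow> R y x"
    and acyc: "\<not> (\<exists>xs. distinct xs \<and> length xs \<ge> 3 \<and> set xs \<subseteq> V
      \<and> (\<forall>i. Suc i < length xs \<longrightarrow> R (xs ! i) (xs ! Suc i)) \<and> R (last xs) (hd xs))"
    and ab: "R a b"
  shows "\<exists>w p. {v. R w v} = {p}"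
proof -
  define P where "P xs \<longleftrightarrow> distinct xs \<and> set xs \<subseteq> V \<and> pathR R xs \<and> 2 \<le> length xs" for xs
  have P0: "P [a, b]" using ab edges by (auto simp: P_def pathR_def nth_Cons split: nat.splits)
  have bnd: "length xs \<le> card V" if "P xs" for xs
    using that fin by (metis P_def card_mono distinct_card)
  have "\<exists>n. (\<exists>xs. P xs \<and> length xs = n) \<and> (\<forall>y. (\<exists>xs. P xs \<and> length xs = y) \<longrightarrow> y \<le> n)"
    by (rule ex_has_greatest_nat[where b="Suc (card V)"]) (use P0 bnd in \<open>auto simp: less_Suc_eq_le\<close>)
  then obtain xs where Pxs: "P xs" and mx: "\<And>ys. P ys \<Longrightarrow> length ys \<le> length xs" by blast
  have l2: "2 \<le> length xs" using Pxs unfolding P_def by simp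
  obtain w r where xr: "xs = w # r" using l2 by (cases xs) auto
  obtain p ys where "r = p # ys" using l2 xr by (cases r) auto
  with xr have xs: "xs = w # p # ys" by simp
  have "R (xs ! 0) (xs ! Suc 0)" using Pxs l2 unfolding P_def pathR_def by simp
  then have wp: "R w p" using xs by simp
  have "z = p" if wz: "R w z" for z
  proof (rule ccontr)
    assume zp: "z \<noteq> p"
    show False
    proof (cases "z \<in> set xs")
      case False
      have "P (z # xs)"
        using Pxs False wz edges sym unfolding P_def pathR_def
        by (auto simp: nth_Cons xs split: nat.splits)
      with mx[of "z # xs"] show False by simp
    next
      case True
      then obtain j where j: "j < length xs" "xs ! j = z" by (meson in_set_conv_nth)
      have "j \<noteq> 0"
      proof
        assume "j = 0" then have "z = w" using j xs by simp
        then show False using wz edges by auto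
      qed
      moreover have "j \<noteq> 1" using j zp xs by auto
      ultimately have j2: "j \<ge> 2" by auto
      define cy where "cy = take (Suc j) xs"
      have "distinct cy" using Pxs unfolding P_def cy_def by auto
      moreover have "length cy \<ge> 3" using j j2 unfolding cy_def by auto
      moreover have "set cy \<subseteq> V" using Pxs unfolding P_def cy_def by (meson order_trans set_take_subset)
      moreover have "\<forall>i. Suc i < length cy \<longrightarrow> R (cy ! i) (cy ! Suc i)"
        using Pxs unfolding P_def pathR_def cy_def by auto
      moreover have "last cy = z" using j unfolding cy_def by (simp add: take_Suc_conv_app_nth)
      moreover have "hd cy = w" unfolding cy_def xs by simp
      moreover have "R z w" using sym wz by blast
      ultimately have "distinct cy \<and> length cy \<ge> 3 \<and> set cy \<subseteq> V
      \<and> (\<forall>i. Suc i < length cy \<longrightarrow> R (cy ! i) (cy ! Suc i)) \<and> R (last cy) (hd cy)" by simp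
      then show False using acyc by blast
    qed
  qed
  then have "{v. R w v} = {p}" using wp by blast
  then show ?thesis by (intro exI)
qed

lemma tree_sum_aux:
  "\<forall>(V::'a set) R. card V = n \<longrightarrow> finite V \<longrightarrow> V \<noteq> {} \<longrightarrow>
     (\<forall>x y. R x y \<longrightarrow> x \<in> V \<and> y \<in> V \<and> x \<noteq> y) \<longrightarrow> (\<forall>x y. R x y \<longrightarrow> R y x) \<longrightarrow>
     (\<forall>x\<in>V. \<forall>y\<in>V. R\<^sup>*\<^sup>* x y) \<longrightarrow>
     \<not> (\<exists>xs. distinct xs \<and> length xs \<ge> 3 \<and> set xs \<subseteq> V
      \<and> (\<forall>i. Suc i < length xs \<longrightarrow> R (xs ! i) (xs ! Suc i)) \<and> R (last xs) (hd xs)) \<longrightarrow>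
     (\<Sum>v\<in>V. 2 - int (card {w\<in>V. R v w})) = 2"
proof (induction n rule: less_induct)
  case (less n)
  show ?case
  proof (intro allI impI)
    fix V :: "'a set" and R :: "'a \<Rightarrow> 'a \<Rightarrow> bool"
    assume cV: "card V = n" and fin: "finite V" and ne: "V \<noteq> {}"
      and edges: "\<forall>x y. R x y \<longrightarrow> x \<in> V \<and> y \<in> V \<and> x \<noteq> y"
      and sym: "\<forall>x y. R x y \<longrightarrow> R y x"
      and conn: "\<forall>x\<in>V. \<forall>y\<in>V. R\<^sup>*\<^sup>* x y"
      and acyc: "\<not> (\<exists>xs. distinct xs \<and> length xs \<ge> 3 \<and> set xs \<subseteq> V
      \<and> (\<forall>i. Suc i < length xs \<longrightarrow> R (xs ! i) (xs ! Suc i)) \<and> R (last xs) (hd xs))"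
    show "(\<Sum>v\<in>V. 2 - int (card {w\<in>V. R v w})) = 2"
    proof (cases "\<exists>a b. R a b")
      case False
      obtain x where x: "x \<in> V" using ne by blast
      have "y = x" if "y \<in> V" for y
      proof -
        have "R\<^sup>*\<^sup>* x y" using conn x that by blast
        then show ?thesis using False by (cases rule: converse_rtranclpE) auto
      qed
      then have "V = {x}" using x by blast
      then show ?thesis using False by simp
    next
      case True
      then obtain a b where ab: "R a b" by blast
      obtain w p where wp: "{v. R w v} = {p}"
        using leaf_exists[OF fin edges sym acyc ab] by blast
      have Rwp: "R w p" using wp by blast
      have wV: "w \<in> V" and pV: "p \<in> V" and pw: "p \<noteq> w" using Rwp edges by auto
      have Rw: "\<And>z. R w z \<longleftrightarrow> z = p" using wp by blast
      define V' where "V' = V - {w}"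
      define R' where "R' x y \<longleftrightarrow> R x y \<and> x \<noteq> w \<and> y \<noteq> w" for x y
      have cV': "card V' < n" using cV fin wV unfolding V'_def by (metis card_Diff1_less)
      have fin': "finite V'" using fin unfolding V'_def by simp
      have ne': "V' \<noteq> {}" using pV pw unfolding V'_def by blast
      have edges': "\<forall>x y. R' x y \<longrightarrow> x \<in> V' \<and> y \<in> V' \<and> x \<noteq> y"
        using edges unfolding R'_def V'_def by auto
      have sym': "\<forall>x y. R' x y \<longrightarrow> R' y x" using sym unfolding R'_def by auto
      have acyc': "\<not> (\<exists>xs. distinct xs \<and> length xs \<ge> 3 \<and> set xs \<subseteq> V'
        \<and> (\<forall>i. Suc i < length xs \<longrightarrow> R' (xs ! i) (xs ! Suc i)) \<and> R' (last xs) (hd xs))"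
        using acyc unfolding R'_def V'_def by blast
      have key: "(z = w \<longrightarrow> R'\<^sup>*\<^sup>* x p) \<and> (z \<noteq> w \<longrightarrow> R'\<^sup>*\<^sup>* x z)"
        if "x \<in> V'" "R\<^sup>*\<^sup>* x z" for x z
        using that(2)
      proof (induction rule: rtranclp_induct)
        case base
        then show ?case using that(1) unfolding V'_def by auto
      next
        case (step y z)
        show ?case
        proof (cases "y = w")
          case True
          then have "z = p" using step.hyps(2) Rw by blast
          then show ?thesis using step.IH True pw by auto
        next
          case False
          note yw = False
          show ?thesis
          proof (cases "z = w")
            case True
            then have "y = p" using step.hyps(2) sym Rw by blast
            then show ?thesis using step.IH yw True by auto
          next
            case False
            then have "R' y z" using yw step.hyps(2) unfolding R'_def by auto
            then show ?thesis using step.IH yw False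
              by (meson rtranclp.rtrancl_into_rtrancl)
          qed
        qed
      qed
      have conn': "\<forall>x\<in>V'. \<forall>y\<in>V'. R'\<^sup>*\<^sup>* x y"
      proof (intro ballI)
        fix x y assume "x \<in> V'" "y \<in> V'"
        then show "R'\<^sup>*\<^sup>* x y" using key[of x y] conn unfolding V'_def by auto
      qed
      have IH: "(\<Sum>v\<in>V'. 2 - int (card {u\<in>V'. R' v u})) = 2"
        using spec[OF spec[OF less.IH[OF cV'], of V'], of R'] fin' ne' edges' sym' conn' acyc' by blast
      have deg: "int (card {u\<in>V. R v u}) = int (card {u\<in>V'. R' v u}) + (if v = p then 1 else 0)"
        if v: "v \<in> V'" for v
      proof (cases "v = p")
        case True
        have "{u\<in>V. R v u} = insert w {u\<in>V'. R' v u}"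
          using True Rwp sym wV v unfolding V'_def R'_def by auto
        moreover have "w \<notin> {u\<in>V'. R' v u}" unfolding V'_def by auto
        moreover have "finite {u\<in>V'. R' v u}" using fin' by simp
        ultimately show ?thesis using True by simp
      next
        case False
        have "{u\<in>V. R v u} = {u\<in>V'. R' v u}"
          using False Rw sym v unfolding V'_def R'_def by auto
        then show ?thesis using False by simp
      qed
      have "(\<Sum>v\<in>V. 2 - int (card {u\<in>V. R v u})) =
          (2 - int (card {u\<in>V. R w u})) + (\<Sum>v\<in>V'. 2 - int (card {u\<in>V. R v u}))"
        using fin wV unfolding V'_def by (simp add: sum.remove)
      also have "{u\<in>V. R w u} = {p}" using Rw pV by auto
      also have "(\<Sum>v\<in>V'. 2 - int (card {u\<in>V. R v u})) =
          (\<Sum>v\<in>V'. (2 - int (card {u\<in>V'. R' v u})) - (if v = p then 1 else 0))"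
        by (rule sum.cong) (auto simp: deg)
      also have "\<dots> = 2 - (\<Sum>v\<in>V'. (if v = p then 1 else 0))"
        by (subst sum_subtractf) (simp only: IH)
      also have "(\<Sum>v\<in>V'. (if v = p then 1 else 0)) = (1::int)"
        using fin' pV pw unfolding V'_def by simp
      finally show ?thesis by simp
    qed
  qed
qed

lemma core:
  fixes V :: "'a set" and nb :: "'a \<Rightarrow> 'a set" and U :: "'a set" and m :: "'a \<Rightarrow> 'a"
    and c l :: nat
  assumes fin: "finite V"
    and nbV: "\<forall>v\<in>V. nb v \<subseteq> V"
    and nbsym: "\<forall>v\<in>V. \<forall>w\<in>V. w \<in> nb v \<longleftrightarrow> v \<in> nb w"
    and UV: "U \<subseteq> V" and inj: "inj_on m U" and img: "m ` U = V - U"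
    and pend: "\<forall>u\<in>U. nb (m u) = {u}"
    and degsum: "(\<Sum>v\<in>V. 2 - int (card (nb v))) = 2 * int c"
    and l2: "l \<ge> 2"
  shows "(\<forall>f::'a\<Rightarrow>int. \<exists>t::'a\<Rightarrow>int. \<forall>v\<in>V.
            (f v + ((\<Sum>w\<in>V. t w) - (\<Sum>w\<in>nb v. t w))) mod int l = 0)
         \<longleftrightarrow> gcd (2 * int c - 1) (int l) = 1"
proof -
  define a where "a v = (if v \<in> U then 1 else 2 - int (card (nb (the_elem (nb v)))))" for v
  have finU: "finite U" using finite_subset[OF UV fin] .
  have mU: "u \<in> U \<Longrightarrow> m u \<in> V \<and> m u \<notin> U" for u using img by (metis Diff_iff imageI)
  have Vsplit: "V = U \<union> m ` U" using img UV by auto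
  have disj: "U \<inter> m ` U = {}" using img by auto
  have finnb: "finite (nb v)" if "v \<in> V" for v by (meson finite_subset fin nbV that)
  have am: "a (m u) = 2 - int (card (nb u))" if "u \<in> U" for u
    using pend that mU unfolding a_def by auto
  have nbu: "nb u = insert (m u) (nb u \<inter> U)" if u: "u \<in> U" for u
  proof -
    have "u \<in> nb (m u)" using pend u by simp
    moreover have "u \<in> V" using u UV by auto
    ultimately have "m u \<in> nb u" using nbsym mU[OF u] by simp
    moreover have "z = m u" if "z \<in> nb u" "z \<notin> U" for z
    proof -
      have uV: "u \<in> V" using u UV by auto
      have "z \<in> V" using that(1) nbV uV by auto
      then have "z \<in> m ` U" using img that(2) by simp
      then obtain u' where u': "u' \<in> U" "z = m u'" by auto
      then have "u \<in> nb (m u')" using nbsym that(1) uV \<open>z \<in> V\<close> by simp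
      then show ?thesis using pend u' by auto
    qed
    ultimately show ?thesis by auto
  qed
  have cardnb: "int (card (nb u)) = int (card (nb u \<inter> U)) + 1" if u: "u \<in> U" for u
  proof -
    have "finite (nb u \<inter> U)" using finU by simp
    moreover have "m u \<notin> nb u \<inter> U" using mU u by simp
    ultimately show ?thesis using nbu[OF u] by (metis card_insert_disjoint of_nat_Suc add.commute)
  qed
  have k1: "(\<Sum>v\<in>nb w. a v) = 1" if w: "w \<in> V" for w
  proof (cases "w \<in> U")
    case True
    have "(\<Sum>v\<in>nb w. a v) = a (m w) + (\<Sum>v\<in>nb w \<inter> U. a v)"
      using nbu[OF True] mU[OF True] finU by (metis Int_iff finite_Int sum.insert)
    also have "(\<Sum>v\<in>nb w \<inter> U. a v) = int (card (nb w \<inter> U))"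
      unfolding a_def by simp
    finally show ?thesis using am[OF True] cardnb[OF True] by simp
  next
    case False
    then have "w \<in> m ` U" using img w by simp
    then obtain u where u: "u \<in> U" "w = m u" by auto
    then show ?thesis using pend unfolding a_def by simp
  qed
  have suma: "(\<Sum>v\<in>V. a v) = 2 * int c"
  proof -
    have "(\<Sum>v\<in>V. a v) = (\<Sum>v\<in>U. a v) + (\<Sum>v\<in>m ` U. a v)"
      using Vsplit disj finU by (simp add: sum.union_disjoint)
    also have "(\<Sum>v\<in>m ` U. a v) = (\<Sum>u\<in>U. 2 - int (card (nb u)))"
      using inj am by (simp add: sum.reindex)
    also have "(\<Sum>v\<in>U. a v) = (\<Sum>u\<in>U. 2 - int (card (nb (m u))))"
      using pend unfolding a_def by simp
    also have "(\<Sum>u\<in>U. 2 - int (card (nb (m u)))) + (\<Sum>u\<in>U. 2 - int (card (nb u)))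
        = (\<Sum>v\<in>m ` U. 2 - int (card (nb v))) + (\<Sum>u\<in>U. 2 - int (card (nb u)))"
      using inj by (simp add: sum.reindex)
    also have "\<dots> = (\<Sum>v\<in>V. 2 - int (card (nb v)))"
      using Vsplit disj finU by (simp add: sum.union_disjoint)
    finally show ?thesis using degsum by simp
  qed
  have k3: "(\<Sum>v\<in>V. a v * ((\<Sum>w\<in>V. t w) - (\<Sum>w\<in>nb v. t w))) = (2 * int c - 1) * (\<Sum>w\<in>V. t w)"
    for t :: "'a \<Rightarrow> int"
  proof -
    have sw: "(\<Sum>v\<in>V. \<Sum>w\<in>nb v. a v * t w) = (\<Sum>w\<in>V. \<Sum>v\<in>nb w. a v * t w)"
    proof -
      have "(\<Sum>v\<in>V. \<Sum>w\<in>nb v. a v * t w) = (\<Sum>v\<in>V. \<Sum>w\<in>V. if w \<in> nb v then a v * t w else 0)"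
        by (rule sum.cong[OF refl]) (use nbV fin in \<open>simp add: sum.If_cases Int_absorb1\<close>)
      also have "\<dots> = (\<Sum>w\<in>V. \<Sum>v\<in>V. if w \<in> nb v then a v * t w else 0)"
        by (rule sum.swap)
      also have "\<dots> = (\<Sum>w\<in>V. \<Sum>v\<in>V. if v \<in> nb w then a v * t w else 0)"
        by (rule sum.cong[OF refl], rule sum.cong[OF refl]) (use nbsym in auto)
      also have "\<dots> = (\<Sum>w\<in>V. \<Sum>v\<in>nb w. a v * t w)"
        by (rule sum.cong[OF refl]) (use nbV fin in \<open>simp add: sum.If_cases Int_absorb1\<close>)
      finally show ?thesis .
    qed
    have "(\<Sum>w\<in>V. \<Sum>v\<in>nb w. a v * t w) = (\<Sum>w\<in>V. t w)"
      by (rule sum.cong[OF refl]) (simp add: sum_distrib_right[symmetric] k1)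
    have e3: "(\<Sum>v\<in>V. a v * (\<Sum>w\<in>V. t w)) = (\<Sum>v\<in>V. a v) * (\<Sum>w\<in>V. t w)"
      by (rule sum_distrib_right[symmetric])
    have "(\<Sum>v\<in>V. a v * ((\<Sum>w\<in>V. t w) - (\<Sum>w\<in>nb v. t w)))
        = (\<Sum>v\<in>V. a v * (\<Sum>w\<in>V. t w) - (\<Sum>w\<in>nb v. a v * t w))"
      by (simp add: right_diff_distrib sum_distrib_left)
    also have "\<dots> = (\<Sum>v\<in>V. a v * (\<Sum>w\<in>V. t w)) - (\<Sum>v\<in>V. \<Sum>w\<in>nb v. a v * t w)"
      by (rule sum_subtractf)
    also have "\<dots> = 2 * int c * (\<Sum>w\<in>V. t w) - (\<Sum>w\<in>V. t w)"
      by (simp only: e3 sw \<open>(\<Sum>w\<in>V. \<Sum>v\<in>nb w. a v * t w) = (\<Sum>w\<in>V. t w)\<close> suma)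
    finally show ?thesis by (simp add: algebra_simps)
  qed
  have lpos: "int l > 0" using l2 by simp
  show ?thesis
  proof
    assume H: "\<forall>f::'a\<Rightarrow>int. \<exists>t::'a\<Rightarrow>int. \<forall>v\<in>V.
            (f v + ((\<Sum>w\<in>V. t w) - (\<Sum>w\<in>nb v. t w))) mod int l = 0"
    show "gcd (2 * int c - 1) (int l) = 1"
    proof (cases "V = {}")
      case True
      then have "c = 0" using degsum by simp
      then show ?thesis by simp
    next
      case False
      have "U \<noteq> {}"
      proof
        assume "U = {}"
        then have "V = {}" using Vsplit by simp
        then show False using False by simp
      qed
      then obtain u0 where u0: "u0 \<in> U" by auto
      have u0V: "u0 \<in> V" using u0 UV by auto
      define f :: "'a \<Rightarrow> int" where "f v = (if v = u0 then -1 else 0)" for v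
      obtain t where t: "\<forall>v\<in>V. (f v + ((\<Sum>w\<in>V. t w) - (\<Sum>w\<in>nb v. t w))) mod int l = 0"
        using H by blast
      have "int l dvd (\<Sum>v\<in>V. a v * (f v + ((\<Sum>w\<in>V. t w) - (\<Sum>w\<in>nb v. t w))))"
      proof (rule dvd_sum)
        fix v assume "v \<in> V"
        then have "int l dvd (f v + ((\<Sum>w\<in>V. t w) - (\<Sum>w\<in>nb v. t w)))"
          using t mod_0_imp_dvd by blast
        then show "int l dvd a v * (f v + ((\<Sum>w\<in>V. t w) - (\<Sum>w\<in>nb v. t w)))"
          by (rule dvd_mult)
      qed
      also have "(\<Sum>v\<in>V. a v * (f v + ((\<Sum>w\<in>V. t w) - (\<Sum>w\<in>nb v. t w))))
          = (\<Sum>v\<in>V. a v * f v) + (\<Sum>v\<in>V. a v * ((\<Sum>w\<in>V. t w) - (\<Sum>w\<in>nb v. t w)))"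
        by (simp add: distrib_left sum.distrib)
      also have "(\<Sum>v\<in>V. a v * f v) = (\<Sum>v\<in>V. if v = u0 then -1 else 0)"
        by (rule sum.cong) (auto simp: f_def a_def u0)
      also have "\<dots> = -1" using fin u0V by simp
      finally have dv: "int l dvd (2 * int c - 1) * (\<Sum>w\<in>V. t w) - 1" using k3 by simp
      have g1: "gcd (2 * int c - 1) (int l) dvd (2 * int c - 1) * (\<Sum>w\<in>V. t w) - 1"
        using dv gcd_dvd2 dvd_trans by blast
      have g2: "gcd (2 * int c - 1) (int l) dvd (2 * int c - 1) * (\<Sum>w\<in>V. t w)"
        by (simp add: dvd_mult2)
      have "gcd (2 * int c - 1) (int l) dvd 1"
        using dvd_diff[OF g2 g1] by simp
      then have "coprime (2 * int c - 1) (int l)" using is_unit_gcd by blast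
      then show ?thesis by (simp add: coprime_iff_gcd_eq_1)
    qed
  next
    assume g: "gcd (2 * int c - 1) (int l) = 1"
    then have cop: "coprime (int l) (2 * int c - 1)"
      by (simp add: coprime_iff_gcd_eq_1 gcd.commute)
    have injl: "\<forall>v\<in>V. int l dvd d v"
      if hd: "\<forall>v\<in>V. int l dvd ((\<Sum>w\<in>V. d w) - (\<Sum>w\<in>nb v. d w))" for d :: "'a \<Rightarrow> int"
    proof -
      have "int l dvd (\<Sum>v\<in>V. a v * ((\<Sum>w\<in>V. d w) - (\<Sum>w\<in>nb v. d w)))"
        using hd by (intro dvd_sum) (simp add: dvd_mult)
      then have "int l dvd (2 * int c - 1) * (\<Sum>w\<in>V. d w)" using k3 by simp
      then have lS: "int l dvd (\<Sum>w\<in>V. d w)" using cop coprime_dvd_mult_right_iff by blast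
      have dU: "int l dvd d u" if u: "u \<in> U" for u
      proof -
        have "int l dvd ((\<Sum>w\<in>V. d w) - (\<Sum>w\<in>nb (m u). d w))" using hd mU[OF u] by blast
        then have "int l dvd ((\<Sum>w\<in>V. d w) - d u)" using pend u by simp
        from dvd_diff[OF lS this] show ?thesis by simp
      qed
      have dM: "int l dvd d (m u)" if u: "u \<in> U" for u
      proof -
        have "int l dvd ((\<Sum>w\<in>V. d w) - (\<Sum>w\<in>nb u. d w))" using hd u UV by blast
        moreover have "(\<Sum>w\<in>nb u. d w) = d (m u) + (\<Sum>w\<in>nb u \<inter> U. d w)"
          using nbu[OF u] mU[OF u] finU by (metis Int_iff finite_Int sum.insert)
        moreover have "int l dvd (\<Sum>w\<in>nb u \<inter> U. d w)" by (rule dvd_sum) (use dU in auto)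
        ultimately have "int l dvd (\<Sum>w\<in>V. d w) - ((\<Sum>w\<in>V. d w) - (d (m u) + (\<Sum>w\<in>nb u \<inter> U. d w))) - (\<Sum>w\<in>nb u \<inter> U. d w)"
          using lS by (metis dvd_diff)
        then show ?thesis by simp
      qed
      show ?thesis
      proof
        fix v assume "v \<in> V"
        then have "v \<in> U \<or> v \<in> m ` U" using Vsplit by auto
        then show "int l dvd d v" using dU dM by auto
      qed
    qed
    define P where "P = PiE V (\<lambda>_. {0..<int l})"
    define \<phi> where "\<phi> t = restrict (\<lambda>v. ((\<Sum>w\<in>V. t w) - (\<Sum>w\<in>nb v. t w)) mod int l) V"
      for t :: "'a \<Rightarrow> int"
    have finP: "finite P" unfolding P_def using fin by (intro finite_PiE) auto
    have sub: "\<phi> ` P \<subseteq> P"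
      unfolding P_def \<phi>_def using lpos by (auto simp: restrict_PiE_iff)
    have injP: "inj_on \<phi> P"
    proof (rule inj_onI)
      fix t1 t2 assume t1: "t1 \<in> P" and t2: "t2 \<in> P" and eq: "\<phi> t1 = \<phi> t2"
      define d where "d v = t1 v - t2 v" for v
      have "\<forall>v\<in>V. int l dvd ((\<Sum>w\<in>V. d w) - (\<Sum>w\<in>nb v. d w))"
      proof
        fix v assume v: "v \<in> V"
        have "((\<Sum>w\<in>V. t1 w) - (\<Sum>w\<in>nb v. t1 w)) mod int l = ((\<Sum>w\<in>V. t2 w) - (\<Sum>w\<in>nb v. t2 w)) mod int l"
          using fun_cong[OF eq, of v] v unfolding \<phi>_def by simp
        then have "int l dvd ((\<Sum>w\<in>V. t1 w) - (\<Sum>w\<in>nb v. t1 w)) - ((\<Sum>w\<in>V. t2 w) - (\<Sum>w\<in>nb v. t2 w))"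
          by (simp add: mod_eq_dvd_iff)
        moreover have "((\<Sum>w\<in>V. t1 w) - (\<Sum>w\<in>nb v. t1 w)) - ((\<Sum>w\<in>V. t2 w) - (\<Sum>w\<in>nb v. t2 w))
           = (\<Sum>w\<in>V. d w) - (\<Sum>w\<in>nb v. d w)"
          unfolding d_def by (simp add: sum_subtractf)
        ultimately show "int l dvd ((\<Sum>w\<in>V. d w) - (\<Sum>w\<in>nb v. d w))" by simp
      qed
      then have dd: "\<forall>v\<in>V. int l dvd d v" by (rule injl)
      show "t1 = t2"
      proof (rule PiE_ext[OF t1[unfolded P_def] t2[unfolded P_def]])
        fix v assume v: "v \<in> V"
        have r1: "0 \<le> t1 v" "t1 v < int l" using t1 v unfolding P_def by (auto simp: PiE_iff)
        have r2: "0 \<le> t2 v" "t2 v < int l" using t2 v unfolding P_def by (auto simp: PiE_iff)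
        have "t1 v mod int l = t2 v mod int l"
          using dd v unfolding d_def by (simp add: mod_eq_dvd_iff)
        then show "t1 v = t2 v" using r1 r2 by simp
      qed
    qed
    have surj: "\<phi> ` P = P" by (rule endo_inj_surj[OF finP sub injP])
    show "\<forall>f::'a\<Rightarrow>int. \<exists>t::'a\<Rightarrow>int. \<forall>v\<in>V.
            (f v + ((\<Sum>w\<in>V. t w) - (\<Sum>w\<in>nb v. t w))) mod int l = 0"
    proof
      fix f :: "'a \<Rightarrow> int"
      define g where "g = restrict (\<lambda>v. (- f v) mod int l) V"
      have "g \<in> P" unfolding g_def P_def using lpos by (auto simp: restrict_PiE_iff)
      then obtain t where t: "t \<in> P" "\<phi> t = g" using surj by (metis imageE)
      have "(f v + ((\<Sum>w\<in>V. t w) - (\<Sum>w\<in>nb v. t w))) mod int l = 0" if v: "v \<in> V" for v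
      proof -
        have "((\<Sum>w\<in>V. t w) - (\<Sum>w\<in>nb v. t w)) mod int l = (- f v) mod int l"
          using fun_cong[OF t(2), of v] v unfolding \<phi>_def g_def by simp
        then have "int l dvd ((\<Sum>w\<in>V. t w) - (\<Sum>w\<in>nb v. t w)) - (- f v)"
          by (simp add: mod_eq_dvd_iff)
        then show ?thesis by (simp add: add.commute dvd_imp_mod_0)
      qed
      then show "\<exists>t::'a\<Rightarrow>int. \<forall>v\<in>V.
            (f v + ((\<Sum>w\<in>V. t w) - (\<Sum>w\<in>nb v. t w))) mod int l = 0" by blast
    qed
  qed
qed

lemma rtranclp_sym_sym:
  assumes sym: "\<And>x y. R x y \<Longrightarrow> R y x" and h: "R\<^sup>*\<^sup>* x y"
  shows "R\<^sup>*\<^sup>* y x"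
  using h
proof (induction rule: rtranclp_induct)
  case base
  then show ?case by simp
next
  case (step y z)
  then show ?case using sym by (meson converse_rtranclp_into_rtranclp)
qed

theorem corollary3p11:
  fixes V :: "'a set" and E :: "'a \<Rightarrow> 'a \<Rightarrow> bool" and l c :: nat
  assumes "simple_graph V E"
    and "l \<ge> 2"
    and "\<forall>C \<in> components V (compl_graph V E). pendant_tree C (induced C (compl_graph V E))"
    and "c = card (components V (compl_graph V E))"
  shows "N_AW V E l \<longleftrightarrow> gcd (2 * int c - 1) (int l) = 1"
proof -
  note sg = assms(1)
  have fin: "finite V" using sg unfolding simple_graph_def by simp
  have Esym: "\<And>x y. E x y \<Longrightarrow> E y x" using sg unfolding simple_graph_def by blast
  define Eb where "Eb = compl_graph V E"
  have EbV: "\<And>x y. Eb x y \<Longrightarrow> x \<in> V \<and> y \<in> V \<and> x \<noteq> y" unfolding Eb_def compl_graph_def by simp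
  have Ebsym: "\<And>x y. Eb x y \<Longrightarrow> Eb y x" unfolding Eb_def compl_graph_def using Esym by blast
  have Rv: "induced V Eb = Eb" using EbV unfolding induced_def by (intro ext) auto
  define comps where "comps = components V Eb"
  define cls where "cls x = {y \<in> V. Eb\<^sup>*\<^sup>* x y}" for x
  have comps_eq: "comps = cls ` V" unfolding comps_def components_def cls_def Rv by auto
  have clsx: "x \<in> cls x" if "x \<in> V" for x using that unfolding cls_def by simp
  have cls_same: "cls x = cls y" if "Eb\<^sup>*\<^sup>* x y" for x y
  proof -
    have "Eb\<^sup>*\<^sup>* y x" using rtranclp_sym_sym[OF Ebsym that] .
    then show ?thesis unfolding cls_def using that by (auto intro: rtranclp_trans)
  qed
  have comp_of: "C = cls v" if hC: "C \<in> comps" and hv: "v \<in> C" for C v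
  proof -
    obtain x where x: "x \<in> V" "C = cls x" using hC comps_eq by auto
    then have "Eb\<^sup>*\<^sup>* x v" using hv unfolding cls_def by auto
    then show ?thesis using x cls_same by simp
  qed
  have compV: "C \<subseteq> V" if "C \<in> comps" for C using that comps_eq unfolding cls_def by auto
  have comp_nb: "w \<in> C" if "C \<in> comps" "v \<in> C" "Eb v w" for C v w
  proof -
    have "C = cls v" using comp_of that by simp
    moreover have "w \<in> V" using EbV that(3) by simp
    ultimately show ?thesis using that(2,3) unfolding cls_def by (auto intro: rtranclp.rtrancl_into_rtrancl)
  qed
  define nb where "nb v = {w \<in> V. Eb v w}" for v
  have nb_C: "{w \<in> C. induced C Eb v w} = nb v" if hC: "C \<in> comps" and hv: "v \<in> C" for C v
  proof (rule set_eqI)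
    fix w
    have "Eb v w \<Longrightarrow> w \<in> C" using comp_nb[OF hC hv] .
    moreover have "C \<subseteq> V" using compV[OF hC] .
    ultimately show "w \<in> {w \<in> C. induced C Eb v w} \<longleftrightarrow> w \<in> nb v"
      using hv unfolding nb_def induced_def by auto
  qed
  have pt: "\<forall>C\<in>comps. pendant_tree C (induced C Eb)" using assms(3) unfolding comps_def Eb_def by simp
  have finC: "finite comps" using comps_eq fin by simp
  have UnC: "\<Union>comps = V" using comps_eq clsx unfolding cls_def by auto
  have disjC: "\<forall>A\<in>comps. \<forall>B\<in>comps. A \<noteq> B \<longrightarrow> A \<inter> B = {}"
  proof (intro ballI impI)
    fix A B assume A: "A \<in> comps" and B: "B \<in> comps" and AB: "A \<noteq> B"
    show "A \<inter> B = {}"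
    proof (rule ccontr)
      assume "A \<inter> B \<noteq> {}"
      then obtain x where "x \<in> A" "x \<in> B" by auto
      then have "A = cls x" "B = cls x" using comp_of A B by auto
      then show False using AB by simp
    qed
  qed
  have finA: "\<forall>A\<in>comps. finite A"
  proof
    fix A assume "A \<in> comps"
    show "finite A" using finite_subset[OF compV[OF \<open>A \<in> comps\<close>] fin] .
  qed
  have sumC: "(\<Sum>v\<in>C. 2 - int (card (nb v))) = 2" if C: "C \<in> comps" for C
  proof -
    let ?R = "induced C Eb"
    have tr: "tree_graph C ?R" using pt C unfolding pendant_tree_def by simp
    have ind: "induced C ?R = ?R" unfolding induced_def by (intro ext) auto
    have conn: "connected_graph C ?R" and ac: "acyclic_graph C ?R" using tr unfolding tree_graph_def by auto
    have finC': "finite C" using finA C by simp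
    have e0: "C \<noteq> {}" using conn unfolding connected_graph_def by simp
    have e1: "\<forall>x y. ?R x y \<longrightarrow> x \<in> C \<and> y \<in> C \<and> x \<noteq> y" using EbV unfolding induced_def by simp
    have e2: "\<forall>x y. ?R x y \<longrightarrow> ?R y x" using Ebsym unfolding induced_def by simp
    have e3: "\<forall>x\<in>C. \<forall>y\<in>C. ?R\<^sup>*\<^sup>* x y" using conn unfolding connected_graph_def ind by simp
    have e4: "\<not> (\<exists>xs. distinct xs \<and> length xs \<ge> 3 \<and> set xs \<subseteq> C
      \<and> (\<forall>i. Suc i < length xs \<longrightarrow> ?R (xs ! i) (xs ! Suc i)) \<and> ?R (last xs) (hd xs))"
      using ac unfolding acyclic_graph_def .
    have h: "card C = card C \<longrightarrow> finite C \<longrightarrow> C \<noteq> {} \<longrightarrow>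
     (\<forall>x y. ?R x y \<longrightarrow> x \<in> C \<and> y \<in> C \<and> x \<noteq> y) \<longrightarrow> (\<forall>x y. ?R x y \<longrightarrow> ?R y x) \<longrightarrow>
     (\<forall>x\<in>C. \<forall>y\<in>C. ?R\<^sup>*\<^sup>* x y) \<longrightarrow>
     \<not> (\<exists>xs. distinct xs \<and> length xs \<ge> 3 \<and> set xs \<subseteq> C
      \<and> (\<forall>i. Suc i < length xs \<longrightarrow> ?R (xs ! i) (xs ! Suc i)) \<and> ?R (last xs) (hd xs)) \<longrightarrow>
     (\<Sum>v\<in>C. 2 - int (card {w\<in>C. ?R v w})) = 2"
      by (rule spec[OF spec[OF tree_sum_aux[of "card C"], of C], of ?R])
    have "(\<Sum>v\<in>C. 2 - int (card {w\<in>C. ?R v w})) = 2"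
      by (rule h[THEN mp, OF refl, THEN mp, OF finC', THEN mp, OF e0, THEN mp, OF e1, THEN mp, OF e2, THEN mp, OF e3, THEN mp, OF e4])
    moreover have "(\<Sum>v\<in>C. 2 - int (card {w\<in>C. ?R v w})) = (\<Sum>v\<in>C. 2 - int (card (nb v)))"
      by (rule sum.cong[OF refl]) (simp add: nb_C[OF C])
    ultimately show ?thesis by simp
  qed
  have degsum: "(\<Sum>v\<in>V. 2 - int (card (nb v))) = 2 * int c"
  proof -
    have "(\<Sum>v\<in>\<Union>comps. 2 - int (card (nb v))) = (sum \<circ> sum) (\<lambda>v. 2 - int (card (nb v))) comps"
      by (rule sum.Union_disjoint[OF finA disjC])
    then have "(\<Sum>v\<in>V. 2 - int (card (nb v))) = (\<Sum>C\<in>comps. \<Sum>v\<in>C. 2 - int (card (nb v)))"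
      by (simp only: UnC comp_apply)
    also have "\<dots> = (\<Sum>C\<in>comps. 2)" by (rule sum.cong[OF refl]) (simp add: sumC)
    also have "\<dots> = 2 * int c" using assms(4) unfolding comps_def Eb_def by simp
    finally show ?thesis .
  qed
  define Q where "Q C p \<longleftrightarrow> fst p \<subseteq> C \<and> bij_betw (snd p) (fst p) (C - fst p)
      \<and> (\<forall>u\<in>fst p. \<forall>x. induced C Eb (snd p u) x \<longleftrightarrow> x = u)" for C and p :: "'a set \<times> ('a \<Rightarrow> 'a)"
  have exQ: "\<forall>C\<in>comps. \<exists>p. Q C p"
  proof
    fix C assume C: "C \<in> comps"
    have "corona_K1_form C (induced C Eb)" using pt C unfolding pendant_tree_def by simp
    then obtain U0 m0 where h: "U0 \<subseteq> C \<and> bij_betw m0 U0 (C - U0)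
      \<and> (\<forall>u\<in>U0. \<forall>x. induced C Eb (m0 u) x \<longleftrightarrow> x = u)"
      unfolding corona_K1_form_def by (elim exE)
    have "Q C (U0, m0)" unfolding Q_def using h by simp
    then show "\<exists>p. Q C p" by (rule exI)
  qed
  obtain F where F: "\<forall>C\<in>comps. Q C (F C)" using bchoice[OF exQ] by (elim exE)
  define Uf where "Uf C = fst (F C)" for C
  define mf where "mf C = snd (F C)" for C
  have UfC: "Uf C \<subseteq> C" and bijC: "bij_betw (mf C) (Uf C) (C - Uf C)"
    and pendC: "\<forall>u\<in>Uf C. \<forall>x. induced C Eb (mf C u) x \<longleftrightarrow> x = u" if hC: "C \<in> comps" for C
  proof -
    have "Q C (F C)" using F hC by simp
    then show "Uf C \<subseteq> C" and "bij_betw (mf C) (Uf C) (C - Uf C)"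
      and "\<forall>u\<in>Uf C. \<forall>x. induced C Eb (mf C u) x \<longleftrightarrow> x = u"
      unfolding Q_def Uf_def mf_def by simp_all
  qed
  define U where "U = (\<Union>C\<in>comps. Uf C)"
  define m where "m u = mf (cls u) u" for u
  have m_eq: "m u = mf C u" if hC: "C \<in> comps" and hu: "u \<in> Uf C" for C u
  proof -
    have "u \<in> C" using UfC[OF hC] hu by blast
    then have "C = cls u" by (rule comp_of[OF hC])
    then show ?thesis unfolding m_def by simp
  qed
  have mC: "mf C u \<in> C - Uf C" if "C \<in> comps" "u \<in> Uf C" for C u
    using bijC[OF that(1)] that(2) by (meson bij_betwE)
  have UV: "U \<subseteq> V" unfolding U_def using UfC compV by blast
  have inj: "inj_on m U"
  proof (rule inj_onI)
    fix u1 u2 assume u1: "u1 \<in> U" and u2: "u2 \<in> U" and eq: "m u1 = m u2"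
    obtain C1 where C1: "C1 \<in> comps" "u1 \<in> Uf C1" using u1 unfolding U_def by auto
    obtain C2 where C2: "C2 \<in> comps" "u2 \<in> Uf C2" using u2 unfolding U_def by auto
    have z1: "m u1 \<in> C1" using mC[OF C1] m_eq[OF C1] by simp
    have z2: "m u1 \<in> C2" using mC[OF C2] m_eq[OF C2] eq by simp
    have "C1 = C2" using comp_of[OF C1(1) z1] comp_of[OF C2(1) z2] by simp
    then have "mf C1 u1 = mf C1 u2" using eq m_eq C1 C2 by simp
    then show "u1 = u2" using bijC[OF C1(1)] C1(2) C2(2) \<open>C1 = C2\<close>
      unfolding bij_betw_def inj_on_def by blast
  qed
  have img: "m ` U = V - U"
  proof
    show "m ` U \<subseteq> V - U"
    proof
      fix z assume "z \<in> m ` U"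
      then obtain u C where C: "C \<in> comps" "u \<in> Uf C" and z: "z = m u" unfolding U_def by auto
      have zC: "z \<in> C - Uf C" using mC[OF C] m_eq[OF C] z by simp
      have "z \<notin> U"
      proof
        assume "z \<in> U"
        then obtain C' where C': "C' \<in> comps" "z \<in> Uf C'" unfolding U_def by auto
        have "z \<in> C'" using C' UfC by blast
        moreover have "z \<in> C" using zC by simp
        ultimately have "C' = C" using comp_of[OF C'(1)] comp_of[OF C(1)] by metis
        then show False using C' zC by simp
      qed
      then show "z \<in> V - U" using zC compV[OF C(1)] by auto
    qed
  next
    show "V - U \<subseteq> m ` U"
    proof
      fix v assume v: "v \<in> V - U"
      define C where "C = cls v"
      have C: "C \<in> comps" unfolding C_def comps_eq using v by simp
      have vC: "v \<in> C" unfolding C_def using clsx v by simp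
      have "v \<notin> Uf C" using v C unfolding U_def by auto
      then have "v \<in> mf C ` Uf C" using bijC[OF C] vC by (simp add: bij_betw_def)
      then obtain u where u: "u \<in> Uf C" "v = mf C u" by auto
      then have "v = m u" using m_eq[OF C] by simp
      moreover have "u \<in> U" using u C unfolding U_def by auto
      ultimately show "v \<in> m ` U" by simp
    qed
  qed
  have pend: "\<forall>u\<in>U. nb (m u) = {u}"
  proof
    fix u assume "u \<in> U"
    then obtain C where C: "C \<in> comps" "u \<in> Uf C" unfolding U_def by auto
    have mu: "m u = mf C u" using m_eq[OF C] .
    have muC: "mf C u \<in> C" using mC[OF C] by simp
    have "Eb (mf C u) x \<longleftrightarrow> x = u" for x
    proof
      assume "Eb (mf C u) x"
      then have "induced C Eb (mf C u) x" using comp_nb[OF C(1) muC] muC unfolding induced_def by simp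
      then show "x = u" using pendC[OF C(1)] C(2) by blast
    next
      assume "x = u"
      then show "Eb (mf C u) x" using pendC[OF C(1)] C(2) unfolding induced_def by blast
    qed
    then show "nb (m u) = {u}" unfolding nb_def mu using EbV by auto
  qed
  have nbV: "\<forall>v\<in>V. nb v \<subseteq> V" unfolding nb_def by auto
  have nbsym: "\<forall>v\<in>V. \<forall>w\<in>V. w \<in> nb v \<longleftrightarrow> v \<in> nb w" unfolding nb_def using Ebsym by blast
  have core_res: "(\<forall>f::'a\<Rightarrow>int. \<exists>t::'a\<Rightarrow>int. \<forall>v\<in>V.
            (f v + ((\<Sum>w\<in>V. t w) - (\<Sum>w\<in>nb v. t w))) mod int l = 0)
         \<longleftrightarrow> gcd (2 * int c - 1) (int l) = 1"
    by (rule core[OF fin nbV nbsym UV inj img pend degsum assms(2)])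
  have sumeq: "(\<Sum>w\<in>{w \<in> V. v \<in> closed_nbhd V E w}. t w) = (\<Sum>w\<in>V. t w) - (\<Sum>w\<in>nb v. t w)"
    if v: "v \<in> V" for v and t :: "'a \<Rightarrow> int"
  proof -
    have "{w \<in> V. v \<in> closed_nbhd V E w} = V - nb v"
      using v Esym unfolding closed_nbhd_def nb_def Eb_def compl_graph_def by auto
    then show ?thesis using fin nbV v by (simp add: sum_diff)
  qed
  have "N_AW V E l \<longleftrightarrow> (\<forall>f::'a\<Rightarrow>int. \<exists>t::'a\<Rightarrow>int. \<forall>v\<in>V.
            (f v + ((\<Sum>w\<in>V. t w) - (\<Sum>w\<in>nb v. t w))) mod int l = 0)"
    unfolding N_AW_def by (simp add: sumeq)
  then show ?thesis using core_res by simp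
qed

end
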